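(* Let $H$ be a graph and $G=L(H)$. Then $G$ is localizable if and only if $H$ contains an independent set $S$ of strong vertices and a set $\mathcal{T}$ of strong triangles of $H$ that decomposes the graph $H-S$ (i.e., each triangle in $\mathcal{T}$ is a subgraph of $H-S$ and each edge of $H-S$ lies in exactly one triangle of $\mathcal{T}$).
   Context: $L(H)$ is the line graph of $H$. A clique is strong if it intersects every maximal independent set; a graph is localizable if its vertex set admits a partition into strong cliques. A vertex $v$ of $H$ is strong if every maximal matching of $H$ covers $v$. A triangle $T$ of $H$ is strong if every maximal matching of $H$ contains an edge of $T$. *)

theory Defs
  imports Main "HOL-Library.Disjoint_Sets"
begin

definition graph :: "'a set \<Rightarrow> 'a set set \<Rightarrow> bool" where
  "graph V E \<longleftrightarrow> finite V \<and> (\<forall>e\<in>E. e \<subseteq> V \<and> card e = 2)"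

definition independent :: "'a set \<Rightarrow> 'a set set \<Rightarrow> 'a set \<Rightarrow> bool" where
  "independent V E S \<longleftrightarrow> S \<subseteq> V \<and> (\<forall>u\<in>S. \<forall>v\<in>S. {u, v} \<notin> E)"

definition maximal_independent :: "'a set \<Rightarrow> 'a set set \<Rightarrow> 'a set \<Rightarrow> bool" where
  "maximal_independent V E S \<longleftrightarrow>
     independent V E S \<and> (\<forall>T. independent V E T \<and> S \<subseteq> T \<longrightarrow> T = S)"

definition clique :: "'a set \<Rightarrow> 'a set set \<Rightarrow> 'a set \<Rightarrow> bool" where
  "clique V E C \<longleftrightarrow> C \<subseteq> V \<and> (\<forall>u\<in>C. \<forall>v\<in>C. u \<noteq> v \<longrightarrow> {u, v} \<in> E)"

definition strong_clique :: "'a set \<Rightarrow> 'a set set \<Rightarrow> 'a set \<Rightarrow> bool" where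
  "strong_clique V E C \<longleftrightarrow>
     clique V E C \<and> (\<forall>I. maximal_independent V E I \<longrightarrow> C \<inter> I \<noteq> {})"

definition localizable :: "'a set \<Rightarrow> 'a set set \<Rightarrow> bool" where
  "localizable V E \<longleftrightarrow> (\<exists>P. partition_on V P \<and> (\<forall>C\<in>P. strong_clique V E C))"

text \<open>Line graph L(H): vertex set E, two distinct edges adjacent iff they share a vertex.\<close>
definition line_graph_edges :: "'a set set \<Rightarrow> 'a set set set" where
  "line_graph_edges E = {{e, f} | e f. e \<in> E \<and> f \<in> E \<and> e \<noteq> f \<and> e \<inter> f \<noteq> {}}"

definition matching :: "'a set set \<Rightarrow> 'a set set \<Rightarrow> bool" where
  "matching E M \<longleftrightarrow> M \<subseteq> E \<and> (\<forall>e\<in>M. \<forall>f\<in>M. e \<noteq> f \<longrightarrow> e \<inter> f = {})"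

definition maximal_matching :: "'a set set \<Rightarrow> 'a set set \<Rightarrow> bool" where
  "maximal_matching E M \<longleftrightarrow>
     matching E M \<and> (\<forall>N. matching E N \<and> M \<subseteq> N \<longrightarrow> N = M)"

definition strong_vertex :: "'a set set \<Rightarrow> 'a \<Rightarrow> bool" where
  "strong_vertex E v \<longleftrightarrow> (\<forall>M. maximal_matching E M \<longrightarrow> v \<in> \<Union>M)"

definition triangle :: "'a set \<Rightarrow> 'a set set \<Rightarrow> 'a set \<Rightarrow> bool" where
  "triangle V E t \<longleftrightarrow> t \<subseteq> V \<and> card t = 3 \<and> (\<forall>u\<in>t. \<forall>v\<in>t. u \<noteq> v \<longrightarrow> {u, v} \<in> E)"

definition triangle_edges :: "'a set \<Rightarrow> 'a set set" where
  "triangle_edges t = {e. e \<subseteq> t \<and> card e = 2}"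

definition strong_triangle :: "'a set set \<Rightarrow> 'a set \<Rightarrow> bool" where
  "strong_triangle E t \<longleftrightarrow> (\<forall>M. maximal_matching E M \<longrightarrow> M \<inter> triangle_edges t \<noteq> {})"

definition del_vertices_V :: "'a set \<Rightarrow> 'a set \<Rightarrow> 'a set" where
  "del_vertices_V V S = V - S"

definition del_vertices_E :: "'a set set \<Rightarrow> 'a set \<Rightarrow> 'a set set" where
  "del_vertices_E E S = {e \<in> E. e \<inter> S = {}}"

definition triangle_decomposition :: "'a set \<Rightarrow> 'a set set \<Rightarrow> 'a set set \<Rightarrow> bool" where
  "triangle_decomposition V E \<T> \<longleftrightarrow>
     (\<forall>t\<in>\<T>. triangle V E t) \<and> (\<forall>e\<in>E. \<exists>!t. t \<in> \<T> \<and> e \<in> triangle_edges t)"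

end

theory Submission
  imports Defs
begin

lemma LE_iff: "{u,v} \<in> line_graph_edges E \<longleftrightarrow> u\<in>E \<and> v\<in>E \<and> u\<noteq>v \<and> u\<inter>v\<noteq>{}"
  unfolding line_graph_edges_def by (auto simp: doubleton_eq_iff)

lemma indep_iff: "independent E (line_graph_edges E) M \<longleftrightarrow> matching E M"
  unfolding independent_def matching_def LE_iff by blast

lemma maxind_iff: "maximal_independent E (line_graph_edges E) M \<longleftrightarrow> maximal_matching E M"
  unfolding maximal_independent_def maximal_matching_def indep_iff by simp

lemma extend: "finite E \<Longrightarrow> matching E M0 \<Longrightarrow> \<exists>M. maximal_matching E M \<and> M0 \<subseteq> M"
proof (induct "card (E - M0)" arbitrary: M0 rule: less_induct)
  case less
  show ?case
  proof (cases "maximal_matching E M0")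
    case True thus ?thesis by blast
  next
    case False
    then obtain N where N: "matching E N" "M0 \<subseteq> N" "N \<noteq> M0"
      using less.prems unfolding maximal_matching_def by blast
    have "N \<subseteq> E" using N(1) matching_def by blast
    then have "E - N \<subset> E - M0" using N(2,3) by blast
    then have "card (E - N) < card (E - M0)" using less.prems(1) by (simp add: psubset_card_mono)
    then obtain M where "maximal_matching E M" "N \<subseteq> M" using less.hyps N(1) less.prems(1) by blast
    thus ?thesis using N(2) by blast
  qed
qed

lemma graph_finE: "graph V E \<Longrightarrow> finite E"
  unfolding graph_def by (meson Pow_iff finite_Pow_iff finite_subset subsetI)

lemma strong_nonadj:
  assumes "graph V E" "strong_clique E (line_graph_edges E) C" "f \<in> E" "f \<notin> C"
  shows "\<exists>g\<in>C. g \<inter> f = {}"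
proof -
  have "matching E {f}" using assms(3) unfolding matching_def by auto
  moreover have "finite E" using graph_finE[OF assms(1)] .
  ultimately obtain M where M: "maximal_matching E M" "{f} \<subseteq> M" using extend by blast
  have "maximal_independent E (line_graph_edges E) M" using M(1) maxind_iff by blast
  then have "C \<inter> M \<noteq> {}" using assms(2) unfolding strong_clique_def by blast
  then obtain g where g: "g \<in> C" "g \<in> M" by blast
  have fM: "f \<in> M" using M(2) by simp
  have gf: "g \<noteq> f" using assms(4) g(1) by blast
  have "matching E M" using M(1) unfolding maximal_matching_def by simp
  then have "g \<inter> f = {}" using g(2) fM gf unfolding matching_def by blast
  then show ?thesis using g(1) by blast
qed

lemma tri_edges3: "a\<noteq>b \<Longrightarrow> a\<noteq>c \<Longrightarrow> b\<noteq>c \<Longrightarrow> triangle_edges {a,b,c} = {{a,b},{a,c},{b,c}}"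
  unfolding triangle_edges_def by (auto simp: card_2_iff)

lemma card3_obtain: "card t = 3 \<Longrightarrow> \<exists>a b c. t = {a,b,c} \<and> a\<noteq>b \<and> a\<noteq>c \<and> b\<noteq>c"
  unfolding card_3_iff by blast

lemma tri_cover: "h = {x,y} \<Longrightarrow> x \<noteq> y \<Longrightarrow> a\<noteq>b \<Longrightarrow> a\<noteq>c \<Longrightarrow> b\<noteq>c \<Longrightarrow>
  h \<inter> {a,b} \<noteq> {} \<Longrightarrow> h \<inter> {b,c} \<noteq> {} \<Longrightarrow> h \<inter> {a,c} \<noteq> {} \<Longrightarrow> h \<in> {{a,b},{b,c},{a,c}}"
  by (cases "x=a"; cases "x=b"; cases "x=c"; cases "y=a"; cases "y=b"; cases "y=c"; simp add: insert_commute; blast)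

definition star :: "'a set set \<Rightarrow> 'a \<Rightarrow> 'a set set" where
  "star E v = {e\<in>E. v \<in> e}"

lemma classify:
  assumes G: "graph V E" and S: "strong_clique E (line_graph_edges E) C" and ne: "C \<noteq> {}"
  shows "(\<exists>v. v \<in> V \<and> C = star E v \<and> strong_vertex E v) \<or>
         (\<exists>t. triangle V E t \<and> C = triangle_edges t \<and> strong_triangle E t)"
proof -
  have CE: "C \<subseteq> E" and adj: "\<And>u w. u\<in>C \<Longrightarrow> w\<in>C \<Longrightarrow> u\<noteq>w \<Longrightarrow> u\<inter>w\<noteq>{}"
    using S unfolding strong_clique_def clique_def LE_iff by blast+
  have hit: "\<And>M. maximal_matching E M \<Longrightarrow> C \<inter> M \<noteq> {}"
    using S unfolding strong_clique_def maxind_iff by blast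
  have e2: "\<And>e. e \<in> E \<Longrightarrow> card e = 2 \<and> e \<subseteq> V" using G unfolding graph_def by blast
  show ?thesis
  proof (cases "\<exists>v. \<forall>e\<in>C. v \<in> e")
    case True
    then obtain v where v: "\<forall>e\<in>C. v \<in> e" by blast
    have "C = star E v"
    proof
      show "C \<subseteq> star E v" using CE v unfolding star_def by blast
      show "star E v \<subseteq> C"
      proof
        fix f assume "f \<in> star E v"
        hence f: "f \<in> E" "v \<in> f" unfolding star_def by auto
        show "f \<in> C"
        proof (rule ccontr)
          assume "f \<notin> C"
          then obtain g where "g \<in> C" "g \<inter> f = {}" using strong_nonadj[OF G S f(1)] by blast
          thus False using v f(2) by blast
        qed
      qed
    qed
    moreover have "v \<in> V" using ne v CE e2 by blast
    moreover have "strong_vertex E v" unfolding strong_vertex_def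
      using hit v by blast
    ultimately show ?thesis by blast
  next
    case False
    obtain e where e: "e \<in> C" using ne by blast
    then obtain a b where ab: "e = {a,b}" "a \<noteq> b" using e2 CE by (metis card_2_iff subsetD)
    obtain f where f: "f \<in> C" "a \<notin> f" using False by blast
    have "f \<noteq> e" using f ab by blast
    hence "b \<in> f" using adj[OF f(1) e] ab f by blast
    obtain x y where xy: "f = {x,y}" "x\<noteq>y" using e2 CE f by (metis card_2_iff subsetD)
    obtain c where c: "f = {b,c}" "c \<noteq> b" using xy \<open>b \<in> f\<close> by (metis doubleton_eq_iff insert_iff singletonD)
    have "c \<noteq> a" using c f by blast
    obtain g where g: "g \<in> C" "b \<notin> g" using False by blast
    have "g \<noteq> e" "g \<noteq> f" using g ab c by blast+
    hence "a \<in> g" "c \<in> g" using adj[OF g(1) e] adj[OF g(1) f(1)] ab c g by blast+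
    have "g = {a,c}"
    proof -
      have "{a,c} \<subseteq> g" using \<open>a \<in> g\<close> \<open>c \<in> g\<close> by blast
      moreover have "card g = 2" using e2 CE g by blast
      moreover have "card {a,c} = 2" using \<open>c \<noteq> a\<close> by simp
      moreover have "finite g" using \<open>card g = 2\<close> card.infinite by fastforce
      ultimately show ?thesis by (metis card_subset_eq)
    qed
    have sub: "C \<subseteq> {{a,b},{b,c},{a,c}}"
    proof
      fix h assume h: "h \<in> C"
      show "h \<in> {{a,b},{b,c},{a,c}}"
      proof (cases "h = e \<or> h = f \<or> h = g")
        case True thus ?thesis using ab c \<open>g = {a,c}\<close> by blast
      next
        case False
        obtain x y where xy: "h = {x,y}" "x\<noteq>y" using e2 CE h by (metis card_2_iff subsetD)
        show ?thesis
          apply (rule tri_cover[OF xy ab(2) \<open>c \<noteq> a\<close>[symmetric] c(2)[symmetric]])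
          using adj[OF h e] adj[OF h f(1)] adj[OF h g(1)] False ab c \<open>g = {a,c}\<close> by auto
      qed
    qed
    have Ceq: "C = {{a,b},{b,c},{a,c}}" using sub e f(1) g(1) ab c \<open>g = {a,c}\<close> by blast
    define t where "t = {a,b,c}"
    have te: "triangle_edges t = C" unfolding t_def Ceq
      using tri_edges3[OF ab(2) \<open>c \<noteq> a\<close>[symmetric] c(2)[symmetric]] by (auto simp: insert_commute)
    have "triangle V E t" unfolding triangle_def
    proof (intro conjI ballI impI)
      show "t \<subseteq> V" using e2 CE Ceq unfolding t_def by blast
      show "card t = 3" unfolding t_def using ab(2) c(2) \<open>c \<noteq> a\<close> by simp
      fix u w assume "u \<in> t" "w \<in> t" "u \<noteq> w"
      then have "{u,w} \<in> C" unfolding t_def Ceq by (auto simp: insert_commute)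
      thus "{u,w} \<in> E" using CE by blast
    qed
    moreover have "strong_triangle E t" unfolding strong_triangle_def te using hit by blast
    ultimately show ?thesis using te by blast
  qed
qed

lemma triD: "triangle V E t \<Longrightarrow> t \<subseteq> V" "triangle V E t \<Longrightarrow> card t = 3"
  "triangle V E t \<Longrightarrow> u \<in> t \<Longrightarrow> w \<in> t \<Longrightarrow> u \<noteq> w \<Longrightarrow> {u,w} \<in> E"
  by (simp_all add: triangle_def)

lemma tri_obtain:
  assumes "triangle V E t"
  obtains a b c where "t = {a,b,c}" "a\<noteq>b" "a\<noteq>c" "b\<noteq>c"
    "triangle_edges t = {{a,b},{a,c},{b,c}}"
proof -
  have "card t = 3" using triD(2)[OF assms] .
  then obtain a b c where "t = {a,b,c}" "a\<noteq>b" "a\<noteq>c" "b\<noteq>c" using card3_obtain by blast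
  moreover have "triangle_edges t = {{a,b},{a,c},{b,c}}" using calculation by (simp add: tri_edges3)
  ultimately show ?thesis by (rule that)
qed

lemma tri_sub: "triangle V E t \<Longrightarrow> triangle_edges t \<subseteq> E"
  unfolding triangle_def triangle_edges_def by (auto simp: card_2_iff)

lemma tri_union: "triangle V E t \<Longrightarrow> \<Union>(triangle_edges t) = t"
  by (erule tri_obtain) auto

lemma tri_ne: "triangle V E t \<Longrightarrow> triangle_edges t \<noteq> {}"
  by (erule tri_obtain) auto

lemma tri_other: "triangle V E t \<Longrightarrow> s \<in> t \<Longrightarrow> \<exists>w. {s,w} \<in> triangle_edges t \<and> {s,w} \<in> E"
proof -
  assume T: "triangle V E t" and st: "s \<in> t"
  have "card t = 3" using triD(2)[OF T] .
  have "t - {s} \<noteq> {}"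
  proof
    assume "t - {s} = {}"
    then have "t \<subseteq> {s}" by blast
    then have "card t \<le> 1" using card_mono[of "{s}" t] by simp
    thus False using \<open>card t = 3\<close> by simp
  qed
  then obtain w where w: "w \<in> t" "w \<noteq> s" by blast
  have "{s,w} \<in> E" using triD(3)[OF T st w(1)] w(2) by simp
  moreover have "{s,w} \<in> triangle_edges t" unfolding triangle_edges_def using st w by auto
  ultimately show ?thesis by blast
qed

lemma tri_from_del: "triangle (del_vertices_V V S) (del_vertices_E E S) t \<Longrightarrow> triangle V E t \<and> t \<inter> S = {}"
  unfolding triangle_def del_vertices_V_def del_vertices_E_def by blast

lemma star_ne: "graph V E \<Longrightarrow> strong_vertex E v \<Longrightarrow> star E v \<noteq> {}"
proof -
  assume G: "graph V E" and sv: "strong_vertex E v"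
  have "matching E {}" unfolding matching_def by simp
  then obtain M where "maximal_matching E M" using extend graph_finE[OF G] by blast
  then have "v \<in> \<Union>M" "M \<subseteq> E" using sv unfolding strong_vertex_def maximal_matching_def matching_def by auto
  thus ?thesis unfolding star_def by blast
qed

lemma star_strong: "graph V E \<Longrightarrow> strong_vertex E v \<Longrightarrow> strong_clique E (line_graph_edges E) (star E v)"
proof -
  assume sv: "strong_vertex E v"
  have "clique E (line_graph_edges E) (star E v)"
    unfolding clique_def LE_iff star_def by blast
  moreover have "star E v \<inter> I \<noteq> {}" if "maximal_independent E (line_graph_edges E) I" for I
  proof -
    have M: "maximal_matching E I" using that maxind_iff by blast
    then have "v \<in> \<Union>I" using sv unfolding strong_vertex_def by blast
    then obtain e where e: "e \<in> I" "v \<in> e" by blast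
    have "I \<subseteq> E" using M unfolding maximal_matching_def matching_def by blast
    then have "e \<in> star E v" using e unfolding star_def by blast
    then show ?thesis using e by blast
  qed
  ultimately show ?thesis unfolding strong_clique_def by blast
qed

lemma tri_strong: "triangle V E t \<Longrightarrow> strong_triangle E t \<Longrightarrow> strong_clique E (line_graph_edges E) (triangle_edges t)"
proof -
  assume T: "triangle V E t" and st: "strong_triangle E t"
  have "clique E (line_graph_edges E) (triangle_edges t)"
  proof -
    obtain a b c where "t = {a,b,c}" "a\<noteq>b" "a\<noteq>c" "b\<noteq>c"
      "triangle_edges t = {{a,b},{a,c},{b,c}}" using tri_obtain[OF T] by blast
    thus ?thesis unfolding clique_def LE_iff using tri_sub[OF T] by auto
  qed
  thus ?thesis using st unfolding strong_clique_def maxind_iff strong_triangle_def by blast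
qed

theorem mainTheorem14:
  fixes V :: "'a set" and E :: "'a set set"
  assumes "graph V E"
  shows "localizable E (line_graph_edges E) \<longleftrightarrow>
    (\<exists>S \<T>. independent V E S \<and> (\<forall>v\<in>S. strong_vertex E v)
       \<and> (\<forall>t\<in>\<T>. strong_triangle E t)
       \<and> triangle_decomposition (del_vertices_V V S) (del_vertices_E E S) \<T>)"
proof
  assume "localizable E (line_graph_edges E)"
  then obtain P where PP: "partition_on E P" and PS: "\<forall>C\<in>P. strong_clique E (line_graph_edges E) C"
    unfolding localizable_def by blast
  have UP: "\<Union>P = E" and neP: "{} \<notin> P" using PP unfolding partition_on_def by auto
  have dj: "\<And>C1 C2. C1 \<in> P \<Longrightarrow> C2 \<in> P \<Longrightarrow> C1 \<inter> C2 \<noteq> {} \<Longrightarrow> C1 = C2"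
    using partition_onD2[OF PP] by (meson disjointD)
  have cl: "(\<exists>v. v \<in> V \<and> C = star E v \<and> strong_vertex E v) \<or>
         (\<exists>t. triangle V E t \<and> C = triangle_edges t \<and> strong_triangle E t)" if "C \<in> P" for C
  proof (rule classify[OF assms])
    show "strong_clique E (line_graph_edges E) C" using PS that by blast
    show "C \<noteq> {}" using neP that by blast
  qed
  define Q where "Q = {C\<in>P. \<exists>v. v \<in> V \<and> C = star E v \<and> strong_vertex E v}"
  define ch where "ch = (\<lambda>C. SOME v. v \<in> V \<and> C = star E v \<and> strong_vertex E v)"
  have chQ: "ch C \<in> V \<and> C = star E (ch C) \<and> strong_vertex E (ch C)" if "C \<in> Q" for C
  proof -
    have "\<exists>v. v \<in> V \<and> C = star E v \<and> strong_vertex E v" using that unfolding Q_def by blast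
    then show ?thesis unfolding ch_def by (rule someI_ex)
  qed
  define S where "S = ch ` Q"
  define T where "T = {t. triangle V E t \<and> triangle_edges t \<in> P \<and> strong_triangle E t}"
  have memS: "s \<in> S \<longleftrightarrow> (\<exists>C\<in>Q. s = ch C)" for s unfolding S_def by blast
  have memT: "t \<in> T \<longleftrightarrow> triangle V E t \<and> triangle_edges t \<in> P \<and> strong_triangle E t" for t
    unfolding T_def by simp
  have memQ: "C \<in> Q \<longleftrightarrow> C \<in> P \<and> (\<exists>v. v \<in> V \<and> C = star E v \<and> strong_vertex E v)" for C
    unfolding Q_def by simp
  have QP: "Q \<subseteq> P" unfolding Q_def by blast
  have noS: "\<And>t s. t \<in> T \<Longrightarrow> s \<in> S \<Longrightarrow> s \<notin> t"
  proof
    fix t s assume t: "t \<in> T" and s: "s \<in> S" and st: "s \<in> t"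
    obtain C where C: "C \<in> Q" "s = ch C" using s memS by blast
    have Cs: "C = star E s" "C \<in> P" using chQ[OF C(1)] C QP by auto
    have tT: "triangle V E t" "triangle_edges t \<in> P" using t memT by auto
    obtain w where w: "{s,w} \<in> triangle_edges t" "{s,w} \<in> E" using tri_other[OF tT(1) st] by blast
    have "{s,w} \<in> C" using Cs w unfolding star_def by auto
    hence eq: "C = triangle_edges t" using dj[OF Cs(2) tT(2)] w by blast
    obtain a b c where abc: "t = {a,b,c}" "a\<noteq>b" "a\<noteq>c" "b\<noteq>c"
      "triangle_edges t = {{a,b},{a,c},{b,c}}" using tri_obtain[OF tT(1)] by blast
    have "triangle_edges t = star E s" using eq Cs(1) by simp
    then have "\<forall>e\<in>triangle_edges t. s \<in> e" by (simp add: star_def)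
    thus False using abc by auto
  qed
  show "\<exists>S \<T>. independent V E S \<and> (\<forall>v\<in>S. strong_vertex E v)
       \<and> (\<forall>t\<in>\<T>. strong_triangle E t)
       \<and> triangle_decomposition (del_vertices_V V S) (del_vertices_E E S) \<T>"
  proof (intro exI conjI)
    show "independent V E S" unfolding independent_def
    proof (intro conjI ballI)
      show "S \<subseteq> V" unfolding S_def using chQ by blast
      fix u v assume u: "u \<in> S" and v: "v \<in> S"
      show "{u,v} \<notin> E"
      proof
        assume uv: "{u,v} \<in> E"
        obtain C1 where C1: "C1 \<in> Q" "u = ch C1" using u memS by blast
        obtain C2 where C2: "C2 \<in> Q" "v = ch C2" using v memS by blast
        have "{u,v} \<in> C1" "{u,v} \<in> C2" using chQ[OF C1(1)] chQ[OF C2(1)] C1 C2 uv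
          unfolding star_def by auto
        hence "C1 = C2" using dj C1(1) C2(1) QP by blast
        hence "u = v" using C1 C2 by simp
        thus False using uv assms unfolding graph_def by auto
      qed
    qed
    show "\<forall>v\<in>S. strong_vertex E v" unfolding S_def using chQ by blast
    show "\<forall>t\<in>T. strong_triangle E t" using memT by blast
    show "triangle_decomposition (del_vertices_V V S) (del_vertices_E E S) T"
      unfolding triangle_decomposition_def
    proof (intro conjI ballI)
      fix t assume t: "t \<in> T"
      hence tr: "triangle V E t" using memT by blast
      have "t \<inter> S = {}" using noS[OF t] by blast
      show "triangle (del_vertices_V V S) (del_vertices_E E S) t"
        unfolding triangle_def
      proof (intro conjI ballI impI)
        show "t \<subseteq> del_vertices_V V S" using triD(1)[OF tr] \<open>t \<inter> S = {}\<close>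
          unfolding del_vertices_V_def by blast
        show "card t = 3" using triD(2)[OF tr] .
        fix u w assume "u \<in> t" "w \<in> t" "u \<noteq> w"
        then have "{u,w} \<in> E" using triD(3)[OF tr] by blast
        moreover have "{u,w} \<inter> S = {}" using \<open>u \<in> t\<close> \<open>w \<in> t\<close> \<open>t \<inter> S = {}\<close> by blast
        ultimately show "{u,w} \<in> del_vertices_E E S" unfolding del_vertices_E_def by blast
      qed
    next
      fix e assume e: "e \<in> del_vertices_E E S"
      hence eE: "e \<in> E" and eS: "e \<inter> S = {}" unfolding del_vertices_E_def by auto
      obtain C where C: "C \<in> P" "e \<in> C" using UP eE by blast
      show "\<exists>!t. t \<in> T \<and> e \<in> triangle_edges t"
      proof (cases "\<exists>v. v \<in> V \<and> C = star E v \<and> strong_vertex E v")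
        case True
        hence "C \<in> Q" using C memQ by blast
        have ch: "C = star E (ch C)" using chQ[OF \<open>C \<in> Q\<close>] by simp
        have "ch C \<in> S" using \<open>C \<in> Q\<close> memS by blast
        moreover have "e \<in> star E (ch C)" using C(2) ch by simp
        then have "ch C \<in> e" unfolding star_def by simp
        ultimately have False using eS by blast
        thus ?thesis ..
      next
        case False
        then obtain t where t: "triangle V E t" "C = triangle_edges t" "strong_triangle E t"
          using cl[OF C(1)] by blast
        have tP: "triangle_edges t \<in> P" using C(1) t(2) by simp
        have tT: "t \<in> T" using t(1,3) tP memT by simp
        have eT: "e \<in> triangle_edges t" using C(2) t(2) by simp
        show ?thesis
        proof (rule ex1I[of _ t])
          show "t \<in> T \<and> e \<in> triangle_edges t" using tT eT by simp
          fix t' assume t': "t' \<in> T \<and> e \<in> triangle_edges t'"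
          have t'P: "triangle_edges t' \<in> P" and t'tr: "triangle V E t'" using t' memT by simp_all
          have "triangle_edges t' \<inter> triangle_edges t \<noteq> {}" using t' eT by blast
          hence eqt: "triangle_edges t' = triangle_edges t" using dj[OF t'P tP] by simp
          have "t' = \<Union>(triangle_edges t')" using tri_union[OF t'tr] by (rule sym)
          also have "\<dots> = \<Union>(triangle_edges t)" using eqt by (rule arg_cong)
          also have "\<dots> = t" using tri_union[OF t(1)] .
          finally show "t' = t" .
        qed
      qed
    qed
  qed
next
  assume "\<exists>S \<T>. independent V E S \<and> (\<forall>v\<in>S. strong_vertex E v)
       \<and> (\<forall>t\<in>\<T>. strong_triangle E t)
       \<and> triangle_decomposition (del_vertices_V V S) (del_vertices_E E S) \<T>"
  then obtain S T where ind: "independent V E S" and sv: "\<forall>v\<in>S. strong_vertex E v"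
    and st: "\<forall>t\<in>T. strong_triangle E t"
    and td: "triangle_decomposition (del_vertices_V V S) (del_vertices_E E S) T" by blast
  have trT: "\<And>t. t \<in> T \<Longrightarrow> triangle V E t \<and> t \<inter> S = {}"
    using td tri_from_del unfolding triangle_decomposition_def by blast
  have uniq: "\<And>e. e \<in> E \<Longrightarrow> e \<inter> S = {} \<Longrightarrow> \<exists>!t. t \<in> T \<and> e \<in> triangle_edges t"
    using td unfolding triangle_decomposition_def del_vertices_E_def by blast
  define P where "P = star E ` S \<union> triangle_edges ` T"
  have "partition_on E P" unfolding partition_on_def disjoint_def
  proof (intro conjI ballI impI)
    show "\<Union>P = E"
    proof
      show "\<Union>P \<subseteq> E" unfolding P_def star_def using tri_sub trT by blast
      show "E \<subseteq> \<Union>P"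
      proof
        fix e assume e: "e \<in> E"
        show "e \<in> \<Union>P"
        proof (cases "e \<inter> S = {}")
          case True
          then obtain t where "t \<in> T" "e \<in> triangle_edges t" using uniq[OF e] by blast
          thus ?thesis unfolding P_def by blast
        next
          case False
          then obtain s where "s \<in> S" "s \<in> e" by blast
          thus ?thesis using e unfolding P_def star_def by blast
        qed
      qed
    qed
    show "{} \<notin> P" unfolding P_def using star_ne[OF assms] sv tri_ne trT by blast
    fix A B assume A: "A \<in> P" and B: "B \<in> P" and AB: "A \<noteq> B"
    show "A \<inter> B = {}"
    proof (rule ccontr)
      assume "A \<inter> B \<noteq> {}"
      then obtain e where eA: "e \<in> A" and eB: "e \<in> B" by blast
      have starstar: "\<And>u v. u \<in> S \<Longrightarrow> v \<in> S \<Longrightarrow> e \<in> star E u \<Longrightarrow> e \<in> star E v \<Longrightarrow> u = v"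
      proof (rule ccontr)
        fix u v assume u: "u \<in> S" and v: "v \<in> S" and eu: "e \<in> star E u" and ev: "e \<in> star E v" and "u \<noteq> v"
        have "e \<in> E" "u \<in> e" "v \<in> e" using eu ev unfolding star_def by auto
        then have "card e = 2" using assms unfolding graph_def by blast
        then have "e = {u,v}" using \<open>u \<in> e\<close> \<open>v \<in> e\<close> \<open>u \<noteq> v\<close> by (auto simp: card_2_iff)
        thus False using \<open>e \<in> E\<close> ind u v unfolding independent_def by blast
      qed
      have startri: "\<And>u t. u \<in> S \<Longrightarrow> t \<in> T \<Longrightarrow> e \<in> star E u \<Longrightarrow> e \<in> triangle_edges t \<Longrightarrow> False"
        using trT unfolding star_def triangle_edges_def by blast
      have tritri: "\<And>t1 t2. t1 \<in> T \<Longrightarrow> t2 \<in> T \<Longrightarrow> e \<in> triangle_edges t1 \<Longrightarrow> e \<in> triangle_edges t2 \<Longrightarrow> t1 = t2"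
      proof -
        fix t1 t2 assume t1: "t1 \<in> T" and t2: "t2 \<in> T" and e1: "e \<in> triangle_edges t1" and e2: "e \<in> triangle_edges t2"
        have "e \<in> E" using tri_sub trT t1 e1 by blast
        moreover have "e \<inter> S = {}" using trT[OF t1] e1 unfolding triangle_edges_def by blast
        ultimately show "t1 = t2" using uniq t1 t2 e1 e2 by blast
      qed
      have Ac: "(\<exists>u\<in>S. A = star E u) \<or> (\<exists>t\<in>T. A = triangle_edges t)" using A unfolding P_def by blast
      have Bc: "(\<exists>u\<in>S. B = star E u) \<or> (\<exists>t\<in>T. B = triangle_edges t)" using B unfolding P_def by blast
      show False
      proof (cases "\<exists>u\<in>S. A = star E u")
        case True
        then obtain u where u: "u \<in> S" "A = star E u" by blast
        show False
        proof (cases "\<exists>u\<in>S. B = star E u")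
          case True
          then obtain v where v: "v \<in> S" "B = star E v" by blast
          have "u = v" using starstar[OF u(1) v(1)] eA eB u v by simp
          thus False using AB u v by simp
        next
          case False
          then obtain t where t: "t \<in> T" "B = triangle_edges t" using Bc by blast
          show False using startri[OF u(1) t(1)] eA eB u t by simp
        qed
      next
        case False
        then obtain t where t: "t \<in> T" "A = triangle_edges t" using Ac by blast
        show False
        proof (cases "\<exists>u\<in>S. B = star E u")
          case True
          then obtain v where v: "v \<in> S" "B = star E v" by blast
          show False using startri[OF v(1) t(1)] eA eB v t by simp
        next
          case False
          then obtain t2 where t2: "t2 \<in> T" "B = triangle_edges t2" using Bc by blast
          have "t = t2" using tritri[OF t(1) t2(1)] eA eB t t2 by simp
          thus False using AB t t2 by simp
        qed
      qed
    qed
  qed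
  moreover have "\<forall>C\<in>P. strong_clique E (line_graph_edges E) C"
    unfolding P_def using star_strong[OF assms] sv tri_strong trT st by blast
  ultimately show "localizable E (line_graph_edges E)" unfolding localizable_def by blast
qed

end
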